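(* As formal power series in $x$, $\widehat B(x)=\sum_{n\ge0}\beta_nx^n$ has the continued fraction expansion $$\widehat B(x)=\cfrac{1}{[1]_q+\cfrac{x}{\frac{q+1}{[1]_q}-\cfrac{x}{[3]_q+\cfrac{q[2]_qx}{\frac{q^2+1}{[2]_q}-\cfrac{[2]_qx}{[5]_q+\cfrac{q^2[3]_qx}{\frac{q^3+1}{[3]_q}-\cfrac{[3]_qx}{\ddots}}}}}}}$$ where the pattern is: for each $n\ge1$ the denominator $[2n-1]_q$ is followed by $+\,q^{n-1}[n]_q x$ over $\frac{q^n+1}{[n]_q}$, which is followed by $-\,[n]_qx$ over $[2n+1]_q$, and so on.
   Context: $q$ is an indeterminate. The $q$-Bernoulli–Carlitz numbers $\beta_n\in\mathbb{Q}(q)$ are defined by: for all $n\ge0$, $q\sum_{k=0}^{n}\binom{n}{k}q^k\beta_k-\beta_n$ equals $q-1$ if $n=0$, $1$ if $n=1$, and $0$ if $n>1$. $[m]_q=(q^m-1)/(q-1)$. *)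

theory Defs
  imports "HOL-Computational_Algebra.Computational_Algebra"
begin

type_synonym Qq = "rat poly fract"

definition qvar :: Qq where
  "qvar = Fract [:0, 1:] 1"

definition qint :: "nat \<Rightarrow> Qq" where
  "qint m = (qvar ^ m - 1) / (qvar - 1)"

text \<open>Right-hand side of the defining relation of the q-Bernoulli-Carlitz numbers.\<close>
definition bc_rhs :: "nat \<Rightarrow> Qq" where
  "bc_rhs n = (if n = 0 then qvar - 1 else if n = 1 then 1 else 0)"

text \<open>Partial denominators a_i of the continued fraction
  1/(a_0 + b_1 x/(a_1 + b_2 x/(a_2 + ...))):
  a_{2m} = [2m+1]_q,  a_{2m+1} = (q^{m+1}+1)/[m+1]_q.\<close>
definition cf_a :: "nat \<Rightarrow> Qq" where
  "cf_a i = (if even i then qint (i + 1)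
             else (qvar ^ ((i + 1) div 2) + 1) / qint ((i + 1) div 2))"

definition cf_b :: "nat \<Rightarrow> Qq" where
  "cf_b i = (if odd i then qvar ^ (i div 2) * qint ((i + 1) div 2)
             else - qint (i div 2))"

fun cf_tail :: "nat \<Rightarrow> nat \<Rightarrow> Qq fps" where
  "cf_tail i 0 = fps_const (cf_a i)"
| "cf_tail i (Suc d) =
     fps_const (cf_a i) + fps_const (cf_b (Suc i)) * fps_X * inverse (cf_tail (Suc i) d)"

definition cf_convergent :: "nat \<Rightarrow> Qq fps" where
  "cf_convergent k = inverse (cf_tail 0 k)"

end

theory Submission imports Defs begin
lemma qvar_pow: "qvar ^ n = Fract (monom 1 n) 1"
proof (induction n)
  case 0 then show ?case by (simp add: One_fract_def monom_0 one_pCons)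
next
  case (Suc n) then show ?case
    by (simp add: qvar_def mult_fract mult_monom monom_Suc flip: monom_Suc)
qed
lemma qvar_pow_ne_const: "n > 0 \<Longrightarrow> qvar ^ n \<noteq> Fract [:c:] 1"
proof
  assume n: "n > 0" and h: "qvar ^ n = Fract [:c:] 1"
  then have "monom (1::rat) n = [:c:]" by (simp add: qvar_pow eq_fract)
  then have "degree (monom (1::rat) n) = degree [:c:]" by simp
  with n show False by (simp add: degree_monom_eq)
qed
lemma qpow_ne1: "n > 0 \<Longrightarrow> qvar ^ n \<noteq> 1"
  using qvar_pow_ne_const[of n 1] by (simp add: One_fract_def one_pCons)
lemma qpow_neg1: "n > 0 \<Longrightarrow> qvar ^ n \<noteq> -1"
  using qvar_pow_ne_const[of n "-1"] by (simp add: One_fract_def one_pCons minus_fract)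
lemma qpow_ne0: "qvar ^ n \<noteq> 0"
  by (simp add: qvar_pow Zero_fract_def eq_fract)
lemma q_ne1: "qvar \<noteq> 1" using qpow_ne1[of 1] by simp
lemma q_ne0: "qvar \<noteq> 0" using qpow_ne0[of 1] by simp
lemma qint_mult: "qint m * (qvar - 1) = qvar ^ m - 1"
  using q_ne1 by (simp add: qint_def)
lemma qint_ne0: "m > 0 \<Longrightarrow> qint m \<noteq> 0"
  using qpow_ne1[of m] q_ne1 by (simp add: qint_def)
lemma q1_ne0: "qvar - 1 \<noteq> 0" using q_ne1 by simp
lemma qint_add: "qint (a + b) = qint a + qvar ^ a * qint b"
proof -
  have "(qint (a + b) - (qint a + qvar ^ a * qint b)) * (qvar - 1) =
     qint (a + b) * (qvar - 1) - qint a * (qvar - 1) - qvar ^ a * (qint b * (qvar - 1))"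
    by (simp add: algebra_simps)
  also have "\<dots> = 0" unfolding qint_mult by (simp add: power_add algebra_simps)
  finally have "(qint (a + b) - (qint a + qvar ^ a * qint b)) * (qvar - 1) = 0" .
  then show ?thesis using q1_ne0 by simp
qed
lemma qpow_qint: "qvar ^ m = 1 + (qvar - 1) * qint m"
  using q_ne1 by (simp add: qint_def field_simps)
lemma qint_1: "qint (Suc 0) = 1" using q1_ne0 by (simp add: qint_def)
lemma qint_Suc: "qint (Suc m) = 1 + qvar * qint m"
  using qint_add[of 1 m] by (simp add: qint_1)

lemma cf_a_even: "cf_a (2*m) = qint m + qvar^m * qint (Suc m)"
  unfolding cf_a_def using qint_add[of m "Suc m"] by (simp add: mult_2)
lemma cf_a_odd: "cf_a (Suc (2*m)) = (qvar^(Suc m) + 1) * inverse (qint (Suc m))"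
  unfolding cf_a_def by (simp add: field_simps)
lemma cf_b_odd: "cf_b (Suc (2*m)) = qvar^m * qint (Suc m)"
  unfolding cf_b_def by simp
lemma cf_b_even: "cf_b (Suc (Suc (2*m))) = - qint (Suc m)"
  unfolding cf_b_def by simp
lemma cf_a_ne0: "cf_a i \<noteq> 0"
proof (cases "even i")
  case True then show ?thesis unfolding cf_a_def using qint_ne0[of "i+1"] by simp
next
  case False
  then have "(i+1) div 2 > 0" by presburger
  then show ?thesis unfolding cf_a_def using False qint_ne0[of "(i+1) div 2"] qpow_neg1[of "(i+1) div 2"]
    by (auto simp: add_eq_0_iff)
qed
lemma cf_b_ne0: "cf_b (Suc i) \<noteq> 0"
proof (cases "even i")
  case True
  then show ?thesis unfolding cf_b_def using qint_ne0[of "(i+2) div 2"] qpow_ne0 by auto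
next
  case False
  then show ?thesis unfolding cf_b_def using qint_ne0[of "(i+1) div 2"] by auto
qed

definition sX :: "Qq fps" where "sX = fps_const qvar * fps_X * inverse (1 - fps_X)"
lemma sX0 [simp]: "sX $ 0 = 0" by (simp add: sX_def)
lemma sX1: "sX $ Suc 0 = qvar" by (simp add: sX_def)
lemma comp_nth1: "(T oo sX) $ Suc 0 = qvar * T $ Suc 0"
  by (simp add: fps_compose_nth sX1)
lemma sX_mult: "sX * (1 - fps_X) = fps_const qvar * fps_X"
proof -
  have "inverse (1 - fps_X) * (1 - fps_X) = (1 :: Qq fps)" by (rule inverse_mult_eq_1) simp
  then show ?thesis unfolding sX_def by (metis mult.assoc mult.right_neutral)
qed

definition ricE :: "'a::comm_ring_1 \<Rightarrow> 'a \<Rightarrow> 'a \<Rightarrow> 'a \<Rightarrow> 'a \<Rightarrow> 'a \<Rightarrow> 'a" where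
  "ricE q M E x T S = (1-x)*(q-1+x)*S*T + (1-x)*(1-M*x)*S + (-(q*(E*E+M*(2*E-1)*x+M*M*(x*x))))*T + q*(M*M*M)*x*(q-1+x)"
definition ricO :: "'a::comm_ring_1 \<Rightarrow> 'a \<Rightarrow> 'a \<Rightarrow> 'a \<Rightarrow> 'a \<Rightarrow> 'a \<Rightarrow> 'a \<Rightarrow> 'a" where
  "ricO q P Q Pv x T S = (q-1+x)*S*T + (Pv*Pv+(Q-2)*Pv*x+x*x)*S + (-(Q*Pv*(Q*Pv+x)))*T + (-(Q*Pv*x*(q-1+x)))"
lemma even_step:
  fixes q M E P Q Pv x T S U W :: "'a::idom"
  assumes "E = 1+(q-1)*M" "P = 1+q*M" "P*Pv = 1" "Q = q*E"
    "T*U = (M+E*P)*U + (E*P)*x" "S*W*(1-x) = (M+E*P)*W*(1-x) + (E*P)*q*x"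
  shows "ricE q M E x T S * U * W * (1-x) = -E*P^3*x*(1-x) * ricO q P Q Pv x U W"
proof -
  have "ricE q M E x T S * U * W * (1-x) = (1-x)*(q-1+x)*(S*W*(1-x))*(T*U) + (1-x)*(1-M*x)*(S*W*(1-x))*U + (-(q*(E*E+M*(2*E-1)*x+M*M*(x*x))))*(T*U)*W*(1-x) + q*(M*M*M)*x*(q-1+x)*U*W*(1-x)"
    unfolding ricE_def by (simp add: algebra_simps)
  also have "\<dots> = -E*P^3*x*(1-x) * ricO q P Q Pv x U W"
    unfolding assms(5,6) ricO_def using assms(1-4) by algebra
  finally show ?thesis .
qed
lemma odd_step:
  fixes q P Q Pv x T S U W :: "'a::idom"
  assumes "Q = 1+(q-1)*P" "P*Pv = 1"
    "T*U = (Q+1)*Pv*U + (-P)*x" "S*W*(1-x) = (Q+1)*Pv*W*(1-x) + (-P)*q*x"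
  shows "ricO q P Q Pv x T S * U * W * (1-x) = Pv*x*ricE q P Q x U W"
proof -
  have "ricO q P Q Pv x T S * U * W * (1-x) = (q-1+x)*(S*W*(1-x))*(T*U) + (Pv*Pv+(Q-2)*Pv*x+x*x)*(S*W*(1-x))*U + (-(Q*Pv*(Q*Pv+x)))*(T*U)*W*(1-x) + (-(Q*Pv*x*(q-1+x)))*U*W*(1-x)"
    unfolding ricO_def by (simp add: algebra_simps)
  also have "\<dots> = Pv*x*ricE q P Q x U W"
    unfolding assms(3,4) ricE_def using assms(1-2) by algebra
  finally show ?thesis .
qed

definition Ric :: "nat \<Rightarrow> Qq fps \<Rightarrow> Qq fps" where
  "Ric i T = (if even i then ricE (fps_const qvar) (fps_const (qint (i div 2))) (fps_const (qvar ^ (i div 2))) fps_X T (T oo sX)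
     else ricO (fps_const qvar) (fps_const (qint (Suc (i div 2)))) (fps_const (qvar ^ (Suc (i div 2))))
            (fps_const (inverse (qint (Suc (i div 2))))) fps_X T (T oo sX))"

lemmas fcpush = fps_const_add[symmetric] fps_const_sub[symmetric] fps_const_mult[symmetric]
  fps_const_neg[symmetric] fps_const_1_eq_1

lemma fc_eq: "a = b \<Longrightarrow> fps_const a = fps_const b" by simp

lemma ric_step:
  assumes R: "Ric i T = 0" and U0: "U $ 0 \<noteq> 0"
    and TU': "T = fps_const (cf_a i) + fps_const (cf_b (Suc i)) * fps_X * inverse U"
  shows "Ric (Suc i) U = 0"
proof -
  define q where "q = fps_const qvar"
  define a where "a = fps_const (cf_a i)"
  define b where "b = fps_const (cf_b (Suc i))"
  define W where "W = U oo sX"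
  have W0: "W $ 0 \<noteq> 0" using U0 by (simp add: W_def)
  have UU: "U * inverse U = 1" using U0 by (rule inverse_mult_eq_1')
  have WW: "W * inverse W = 1" using W0 by (rule inverse_mult_eq_1')
  have invW: "inverse U oo sX = inverse W" unfolding W_def by (rule fps_inverse_compose) (simp_all add: U0)
  have TS: "T oo sX = a + b * sX * inverse W"
    unfolding TU' a_def b_def by (simp add: fps_compose_add_distrib fps_compose_mult_distrib invW)
  have TU: "T * U = a * U + b * fps_X"
  proof -
    have "T * U = a * U + b * fps_X * (U * inverse U)"
      unfolding TU' a_def b_def by (simp add: algebra_simps)
    then show ?thesis by (simp add: UU)
  qed
  have SW: "(T oo sX) * W * (1 - fps_X) = a * W * (1 - fps_X) + b * q * fps_X"
  proof -
    have "(T oo sX) * W * (1 - fps_X) = a * W * (1 - fps_X) + b * (sX * (1 - fps_X)) * (W * inverse W)"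
      unfolding TS by (simp add: algebra_simps)
    also have "\<dots> = a * W * (1 - fps_X) + b * q * fps_X"
      unfolding sX_mult WW q_def by (simp add: mult.assoc)
    finally show ?thesis .
  qed
  have Pne: "qint (Suc m) \<noteq> 0" for m using qint_ne0 by simp
  have hPi: "fps_const (qint (Suc m)) * fps_const (inverse (qint (Suc m))) = 1" for m
    using Pne[of m] by simp
  have hE: "fps_const (qvar ^ m) = 1 + (q - 1) * fps_const (qint m)" for m
    unfolding q_def by (subst fc_eq[OF qpow_qint]) (simp only: fcpush)
  have hP: "fps_const (qint (Suc m)) = 1 + q * fps_const (qint m)" for m
    unfolding q_def by (subst fc_eq[OF qint_Suc]) (simp only: fcpush)
  have hQ: "fps_const (qvar ^ Suc m) = q * fps_const (qvar ^ m)" for m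
    unfolding q_def by simp
  have Xne: "(fps_X :: Qq fps) \<noteq> 0" by simp
  have X1ne: "(1 - fps_X :: Qq fps) \<noteq> 0" by (metis fps_X_neq_zero one_neq_zero right_minus_eq fps_one_nth fps_X_nth zero_neq_one)
  consider m where "i = 2*m" | m where "i = Suc (2*m)" by (cases "even i") (auto elim!: evenE oddE)
  then show ?thesis
  proof cases
    case 1
    let ?M = "fps_const (qint m)" and ?E = "fps_const (qvar ^ m)" and ?P = "fps_const (qint (Suc m))"
      and ?Q = "fps_const (qvar ^ Suc m)" and ?Pv = "fps_const (inverse (qint (Suc m)))"
    have ha: "a = ?M + ?E * ?P" unfolding a_def 1 cf_a_even by (simp only: fcpush)
    have hb: "b = ?E * ?P" unfolding b_def 1 cf_b_odd by (simp only: fcpush)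
    have "ricE q ?M ?E fps_X T (T oo sX) * U * W * (1 - fps_X) = - ?E * ?P ^ 3 * fps_X * (1 - fps_X) * ricO q ?P ?Q ?Pv fps_X U W"
      by (rule even_step[OF hE hP hPi hQ]) (use TU SW ha hb in simp_all)
    moreover have "ricE q ?M ?E fps_X T (T oo sX) = 0" using R unfolding Ric_def 1 q_def by simp
    ultimately have "- ?E * ?P ^ 3 * fps_X * (1 - fps_X) * ricO q ?P ?Q ?Pv fps_X U W = 0" by simp
    moreover have "- ?E * ?P ^ 3 * fps_X * (1 - fps_X) \<noteq> 0"
      using qpow_ne0 Pne[of m] Xne X1ne by (simp del: fps_const_power)
    ultimately have "ricO q ?P ?Q ?Pv fps_X U W = 0" by (simp only: mult_eq_0_iff) blast
    then show ?thesis unfolding Ric_def 1 q_def W_def by simp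
  next
    case 2
    let ?P = "fps_const (qint (Suc m))"
      and ?Q = "fps_const (qvar ^ Suc m)" and ?Pv = "fps_const (inverse (qint (Suc m)))"
    have ha: "a = (?Q + 1) * ?Pv" unfolding a_def 2 cf_a_odd by (simp only: fcpush)
    have hb: "b = - ?P" unfolding b_def 2 cf_b_even by (simp only: fcpush)
    have "ricO q ?P ?Q ?Pv fps_X T (T oo sX) * U * W * (1 - fps_X) = ?Pv * fps_X * ricE q ?P ?Q fps_X U W"
      by (rule odd_step[OF hE hPi]) (use TU SW ha hb in simp_all)
    moreover have "ricO q ?P ?Q ?Pv fps_X T (T oo sX) = 0" using R unfolding Ric_def 2 q_def by simp
    ultimately have "?Pv * fps_X * ricE q ?P ?Q fps_X U W = 0" by simp
    moreover have "?Pv * fps_X \<noteq> 0" using Pne[of m] Xne by simp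
    ultimately have "ricE q ?P ?Q fps_X U W = 0" by simp
    then show ?thesis unfolding Ric_def 2 q_def W_def by simp
  qed
qed

lemma ric_t1:
  assumes R: "Ric i T = 0" and T0: "T $ 0 = cf_a i"
  shows "T $ Suc 0 = cf_b (Suc i) / cf_a (Suc i)"
proof -
  have R1: "(Ric i T) $ Suc 0 = 0" using R by simp
  consider m where "i = 2*m" | m where "i = Suc (2*m)" by (cases "even i") (auto elim!: evenE oddE)
  then show ?thesis
  proof cases
    case 1
    define E where "E = qvar ^ m"
    define M where "M = qint m"
    define P where "P = qint (Suc m)"
    define t1 where "t1 = T $ Suc 0"
    define D where "D = qvar * E + 1"
    have hE: "E = 1 + (qvar - 1) * M" unfolding E_def M_def by (rule qpow_qint)
    have hP: "P = 1 + qvar * M" unfolding P_def M_def by (rule qint_Suc)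
    have ha: "T $ 0 = M + E * P" using T0 unfolding 1 cf_a_even E_def M_def P_def .
    have eq: "qvar * t1 + (qvar * (M * T $ 0) + (T $ 0 * (T $ 0 * 2) +
       (qvar * (qvar * (M * (M * M))) + qvar * (qvar * (T $ 0 * t1))))) =
     T $ 0 + (M * T $ 0 + (T $ 0 * t1 + (qvar * (T $ 0 * T $ 0) + (qvar * (M * (M * M)) +
       (qvar * (E * (E * t1)) + qvar * (M * (T $ 0 * (2 * E))))))))"
      using R1 unfolding 1 E_def M_def t1_def by (simp add: Ric_def ricE_def comp_nth1 algebra_simps)
    have key: "((qvar * E)^2 - 1) * (t1 * D - E * P^2) = 0"
      using eq hE hP ha unfolding D_def by algebra
    have "(qvar * E)^2 = qvar ^ (Suc m * 2)" unfolding E_def by (simp only: power_Suc[symmetric] power_mult)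
    then have "(qvar * E)^2 \<noteq> 1" using qpow_ne1[of "Suc m * 2"] by simp
    then have t1D: "t1 * D = E * P^2" using key by simp
    have Dne: "D \<noteq> 0" unfolding D_def E_def using qpow_neg1[of "Suc m"] by (auto simp: add_eq_0_iff)
    have Pne: "P \<noteq> 0" unfolding P_def using qint_ne0 by simp
    have "cf_b (Suc i) / cf_a (Suc i) = E * P^2 / D"
      unfolding 1 cf_b_odd cf_a_odd E_def P_def D_def using Pne[unfolded P_def]
      by (simp add: field_simps power2_eq_square)
    moreover have "t1 = E * P^2 / D" using t1D Dne by (simp add: field_simps)
    ultimately show ?thesis by (simp add: t1_def)
  next
    case 2
    define E where "E = qvar ^ m"
    define P where "P = qint (Suc m)"
    define Pv where "Pv = inverse (qint (Suc m))"
    define t1 where "t1 = T $ Suc 0"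
    define D where "D = P + qvar * E * (1 + qvar * P)"
    have Pne: "P \<noteq> 0" unfolding P_def using qint_ne0 by simp
    have hQ: "qvar * E = 1 + (qvar - 1) * P" unfolding E_def P_def using qpow_qint[of "Suc m"] by simp
    have hPv: "P * Pv = 1" unfolding Pv_def using Pne unfolding P_def by simp
    have ha: "T $ 0 = (qvar * E + 1) * Pv" using T0 unfolding 2 cf_a_odd E_def Pv_def by simp
    have eq: "T $ 0 * T $ 0 + (qvar * (E * Pv) + (qvar * (qvar * (T $ 0 * t1)) + qvar * (Pv * (Pv * t1)))) =
     T $ 0 * t1 + (qvar * (qvar * (E * Pv)) + (T $ 0 * (2 * Pv) + qvar * (qvar * (E * (E * (Pv * (Pv * t1)))))))"
      using R1 unfolding 2 E_def Pv_def t1_def by (simp add: Ric_def ricO_def comp_nth1 algebra_simps)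
    have key: "Pv^2 * (qvar * (qvar * E)^2 - 1) * (t1 * D + P) = 0"
      using eq hQ hPv ha unfolding D_def by algebra
    have "qvar * (qvar * E)^2 = qvar * qvar ^ (Suc m * 2)" unfolding E_def by (simp only: power_Suc[symmetric] power_mult)
    then have "qvar * (qvar * E)^2 \<noteq> 1" using qpow_ne1[of "Suc (Suc m * 2)"] by (simp only: power_Suc) simp
    moreover have "Pv \<noteq> 0" using hPv by auto
    ultimately have f1: "Pv^2 * (qvar * (qvar * E)^2 - 1) \<noteq> 0" by simp
    have "t1 * D + P = 0" by (metis key f1 mult_eq_0_iff)
    then have t1D: "t1 * D = - P" by (simp add: eq_neg_iff_add_eq_0)
    have "D = qint (2 * Suc m + 1)"
      unfolding D_def P_def E_def using qint_add[of "Suc m" "Suc (Suc m)"] qint_Suc[of "Suc m"]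
      by (simp add: mult_2)
    then have Dne: "D \<noteq> 0" using qint_ne0 by simp
    have "cf_b (Suc i) / cf_a (Suc i) = - P / D"
    proof -
      have si: "Suc i = 2 * Suc m" unfolding 2 by simp
      have "cf_a (Suc i) = D" unfolding si cf_a_even D_def P_def E_def qint_Suc[of "Suc m"] by simp
      moreover have "cf_b (Suc i) = - P" unfolding 2 P_def using cf_b_even[of m] by simp
      ultimately show ?thesis by simp
    qed
    moreover have "t1 = - P / D" using t1D Dne by (simp add: field_simps)
    ultimately show ?thesis by (simp add: t1_def)
  qed
qed

definition Dg :: "Qq fps" where "Dg = inverse (1 - fps_X)"
lemma Dg_eq: "Dg = Abs_fps (\<lambda>n. 1)"
  unfolding Dg_def fps_inverse_gp'[symmetric] by (rule fps_inverse_idempotent) simp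
lemma Dg_mult: "Dg * (1 - fps_X) = 1"
  unfolding Dg_def by (rule inverse_mult_eq_1) simp
lemma mult_Dg_nth: "(f * Dg) $ n = (\<Sum>j=0..n. f $ j)"
  by (simp add: Dg_eq fps_mult_nth)
lemma sX_Dg: "sX = fps_const qvar * fps_X * Dg" unfolding sX_def Dg_def ..

lemma sXpow_Dg_nth: "(sX ^ i * Dg) $ n = qvar ^ i * of_nat (n choose i)"
proof (induction i arbitrary: n)
  case 0 then show ?case by (simp add: Dg_eq)
next
  case (Suc i)
  have e: "sX ^ Suc i * Dg = fps_const qvar * (fps_X * ((sX ^ i * Dg) * Dg))"
    by (simp add: sX_Dg algebra_simps)
  show ?case
  proof (cases n)
    case 0 then show ?thesis unfolding e by simp
  next
    case (Suc k)
    have "(fps_X * ((sX ^ i * Dg) * Dg)) $ n = ((sX ^ i * Dg) * Dg) $ k"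
      unfolding Suc by simp
    also have "\<dots> = (\<Sum>j=0..k. (sX ^ i * Dg) $ j)" by (rule mult_Dg_nth)
    also have "\<dots> = (\<Sum>j=0..k. qvar ^ i * of_nat (j choose i))" using Suc.IH by simp
    also have "\<dots> = qvar ^ i * of_nat (\<Sum>j\<le>k. j choose i)"
      by (simp add: sum_distrib_left atLeast0AtMost)
    also have "\<dots> = qvar ^ i * of_nat (n choose Suc i)"
      unfolding sum_choose_upper Suc ..
    finally show ?thesis unfolding e by simp
  qed
qed

lemma sXpow_nth_low: "j < i \<Longrightarrow> (sX ^ i) $ j = 0"
proof -
  assume "j < i"
  have "sX ^ i = fps_X ^ i * (fps_const qvar * Dg) ^ i"
    by (simp add: sX_Dg power_mult_distrib algebra_simps)
  then show ?thesis using \<open>j < i\<close> by (simp add: fps_X_power_mult_nth)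
qed

lemma comp_Dg_nth: "((B oo sX) * Dg) $ n = (\<Sum>i=0..n. B $ i * qvar ^ i * of_nat (n choose i))"
proof -
  have "((B oo sX) * Dg) $ n = (\<Sum>j=0..n. (B oo sX) $ j)" by (rule mult_Dg_nth)
  also have "\<dots> = (\<Sum>j=0..n. \<Sum>i=0..n. B $ i * (sX ^ i) $ j)"
  proof (rule sum.cong[OF refl])
    fix j assume "j \<in> {0..n}"
    then have jn: "j \<le> n" by simp
    have "(B oo sX) $ j = (\<Sum>i=0..j. B $ i * (sX ^ i) $ j)" by (rule fps_compose_nth)
    also have "\<dots> = (\<Sum>i=0..n. B $ i * (sX ^ i) $ j)"
      by (rule sum.mono_neutral_left) (use jn sXpow_nth_low in auto)
    finally show "(B oo sX) $ j = (\<Sum>i=0..n. B $ i * (sX ^ i) $ j)" .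
  qed
  also have "\<dots> = (\<Sum>i=0..n. B $ i * (\<Sum>j=0..n. (sX ^ i) $ j))"
    by (subst sum.swap) (simp add: sum_distrib_left)
  also have "\<dots> = (\<Sum>i=0..n. B $ i * qvar ^ i * of_nat (n choose i))"
    by (rule sum.cong[OF refl]) (simp add: mult_Dg_nth[symmetric] sXpow_Dg_nth)
  finally show ?thesis .
qed

lemma base_eq:
  fixes beta :: "nat \<Rightarrow> Qq"
  assumes h: "\<And>n. qvar * (\<Sum>k = 0..n. of_nat (n choose k) * qvar ^ k * beta k) - beta n = bc_rhs n"
  shows "fps_const qvar * (Abs_fps beta oo sX) = (1 - fps_X) * (Abs_fps beta + (fps_const qvar - 1) + fps_X)"
proof -
  let ?B = "Abs_fps beta"
  have "fps_const qvar * ((?B oo sX) * Dg) = ?B + fps_const (qvar - 1) + fps_X"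
  proof (rule fps_ext)
    fix n
    have "(fps_const qvar * ((?B oo sX) * Dg)) $ n = qvar * (\<Sum>k = 0..n. of_nat (n choose k) * qvar ^ k * beta k)"
      by (simp only: fps_mult_left_const_nth comp_Dg_nth) (simp add: mult_ac)
    also have "\<dots> = beta n + bc_rhs n" using h[of n] by (simp add: algebra_simps)
    also have "\<dots> = (?B + fps_const (qvar - 1) + fps_X) $ n"
      by (simp add: bc_rhs_def fps_X_nth)
    finally show "(fps_const qvar * ((?B oo sX) * Dg)) $ n = (?B + fps_const (qvar - 1) + fps_X) $ n" .
  qed
  then have eq: "fps_const qvar * ((?B oo sX) * Dg) * (1 - fps_X) = (?B + fps_const (qvar - 1) + fps_X) * (1 - fps_X)"
    by simp
  have fcq: "fps_const (qvar - 1) = fps_const qvar - 1" by (metis fps_const_1_eq_1 fps_const_sub)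
  have "fps_const qvar * (?B oo sX) = fps_const qvar * ((?B oo sX) * Dg) * (1 - fps_X)"
    using Dg_mult by (simp add: mult.assoc)
  also have "\<dots> = (?B + fps_const (qvar - 1) + fps_X) * (1 - fps_X)" by (rule eq)
  also have "\<dots> = (1 - fps_X) * (?B + (fps_const qvar - 1) + fps_X)" unfolding fcq by (rule mult.commute)
  finally show ?thesis .
qed

lemma beta_zero:
  fixes beta :: "nat \<Rightarrow> Qq"
  assumes h: "\<And>n. qvar * (\<Sum>k = 0..n. of_nat (n choose k) * qvar ^ k * beta k) - beta n = bc_rhs n"
  shows "beta 0 = 1"
proof -
  have "(qvar - 1) * beta 0 = (qvar - 1) * 1" using h[of 0] by (simp add: bc_rhs_def algebra_simps)
  then show ?thesis using q1_ne0 by simp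
qed

lemma base_ric_gen:
  fixes q x B Bs T S :: "'a::idom"
  assumes "T * B = 1" "S * Bs = 1" "q * Bs = (1 - x) * (B + (q - 1) + x)"
  shows "ricE q 0 1 x T S = 0"
  using assms unfolding ricE_def by algebra

lemma base_ric:
  fixes beta :: "nat \<Rightarrow> Qq"
  assumes h: "\<And>n. qvar * (\<Sum>k = 0..n. of_nat (n choose k) * qvar ^ k * beta k) - beta n = bc_rhs n"
  shows "Ric 0 (inverse (Abs_fps beta)) = 0"
proof -
  let ?B = "Abs_fps beta"
  have B0: "?B $ 0 \<noteq> 0" by (simp add: beta_zero[OF h])
  have c: "inverse ?B oo sX = inverse (?B oo sX)" by (rule fps_inverse_compose) (simp_all add: beta_zero[OF h])
  have "ricE (fps_const qvar) 0 1 fps_X (inverse ?B) (inverse ?B oo sX) = 0"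
    unfolding c
    by (rule base_ric_gen[OF inverse_mult_eq_1[OF B0] inverse_mult_eq_1 base_eq[OF h]]) (simp add: beta_zero[OF h])
  then show ?thesis unfolding Ric_def by (simp add: qint_def)
qed

lemma step_build:
  fixes T :: "Qq fps"
  assumes T0: "T $ 0 = cf_a i" and T1: "T $ Suc 0 = cf_b (Suc i) / cf_a (Suc i)"
    and U: "U = fps_const (cf_b (Suc i)) * inverse (fps_shift 1 (T - fps_const (cf_a i)))"
  shows "U $ 0 = cf_a (Suc i)"
    and "T = fps_const (cf_a i) + fps_const (cf_b (Suc i)) * fps_X * inverse U"
proof -
  let ?a = "cf_a i" and ?b = "cf_b (Suc i)" and ?a' = "cf_a (Suc i)"
  define Sh where "Sh = fps_shift 1 (T - fps_const ?a)"
  have bne: "?b \<noteq> 0" by (rule cf_b_ne0)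
  have a'ne: "?a' \<noteq> 0" by (rule cf_a_ne0)
  have Sh0: "Sh $ 0 = ?b / ?a'" unfolding Sh_def using T1 by simp
  then have Sh0ne: "Sh $ 0 \<noteq> 0" using bne a'ne by simp
  have "U $ 0 = ?b * inverse (Sh $ 0)" unfolding U Sh_def[symmetric] by simp
  then show "U $ 0 = ?a'" using Sh0 bne a'ne by simp
  have XSh: "fps_X * Sh = T - fps_const ?a"
  proof (rule fps_ext)
    fix n show "(fps_X * Sh) $ n = (T - fps_const ?a) $ n"
      unfolding Sh_def using T0 by (cases n) simp_all
  qed
  have "inverse U = fps_const (inverse ?b) * Sh"
    unfolding U Sh_def[symmetric] fps_inverse_mult fps_const_inverse
    using Sh0ne by simp
  then have "fps_const ?b * fps_X * inverse U = fps_const (?b * inverse ?b) * (fps_X * Sh)"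
    by (simp add: algebra_simps)
  also have "\<dots> = T - fps_const ?a" using bne by (simp add: XSh)
  finally show "T = fps_const ?a + fps_const ?b * fps_X * inverse U" by simp
qed

fun Tq :: "(nat \<Rightarrow> Qq) \<Rightarrow> nat \<Rightarrow> Qq fps" where
  "Tq beta 0 = inverse (Abs_fps beta)"
| "Tq beta (Suc i) = fps_const (cf_b (Suc i)) * inverse (fps_shift 1 (Tq beta i - fps_const (cf_a i)))"

lemma Tq_inv:
  fixes beta :: "nat \<Rightarrow> Qq"
  assumes h: "\<And>n. qvar * (\<Sum>k = 0..n. of_nat (n choose k) * qvar ^ k * beta k) - beta n = bc_rhs n"
  shows "Ric i (Tq beta i) = 0 \<and> Tq beta i $ 0 = cf_a i"
proof (induction i)
  case 0
  have "cf_a 0 = 1" by (simp add: cf_a_def qint_1)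
  then show ?case using base_ric[OF h] by (simp add: beta_zero[OF h])
next
  case (Suc i)
  then have R: "Ric i (Tq beta i) = 0" and T0: "Tq beta i $ 0 = cf_a i" by auto
  note T1 = ric_t1[OF R T0]
  note sb = step_build[OF T0 T1 Tq.simps(2)]
  have "Ric (Suc i) (Tq beta (Suc i)) = 0"
    by (rule ric_step[OF R _ sb(2)]) (unfold sb(1), rule cf_a_ne0)
  then show ?case using sb(1) by blast
qed

lemma Tq_rel:
  fixes beta :: "nat \<Rightarrow> Qq"
  assumes h: "\<And>n. qvar * (\<Sum>k = 0..n. of_nat (n choose k) * qvar ^ k * beta k) - beta n = bc_rhs n"
  shows "Tq beta i = fps_const (cf_a i) + fps_const (cf_b (Suc i)) * fps_X * inverse (Tq beta (Suc i))"
proof -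
  have R: "Ric i (Tq beta i) = 0" and T0: "Tq beta i $ 0 = cf_a i" using Tq_inv[OF h] by auto
  show ?thesis by (rule step_build(2)[OF T0 ric_t1[OF R T0] Tq.simps(2)])
qed

lemma cf_tail_nth0: "cf_tail i d $ 0 = cf_a i"
  by (induction d arbitrary: i) simp_all

lemma mult_low:
  fixes f g :: "'a::comm_ring_1 fps"
  assumes "\<And>j. j \<le> d \<Longrightarrow> f $ j = 0" "k \<le> d"
  shows "(f * g) $ k = 0"
  unfolding fps_mult_nth using assms by (intro sum.neutral) auto

lemma inv_diff:
  fixes C T :: "Qq fps"
  assumes "C $ 0 \<noteq> 0" "T $ 0 \<noteq> 0"
  shows "inverse C - inverse T = (T - C) * (inverse C * inverse T)"
proof -
  have a: "C * inverse C = 1" using assms(1) by (rule inverse_mult_eq_1')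
  have b: "T * inverse T = 1" using assms(2) by (rule inverse_mult_eq_1')
  have "(T - C) * (inverse C * inverse T) = (T * inverse T) * inverse C - (C * inverse C) * inverse T"
    by (simp add: algebra_simps)
  then show ?thesis using a b by simp
qed

lemma tail_agree:
  fixes T :: "nat \<Rightarrow> Qq fps"
  assumes rel: "\<And>i. T i = fps_const (cf_a i) + fps_const (cf_b (Suc i)) * fps_X * inverse (T (Suc i))"
    and T0: "\<And>i. T i $ 0 = cf_a i"
  shows "k \<le> d \<Longrightarrow> (cf_tail i d - T i) $ k = 0"
proof (induction d arbitrary: i k)
  case 0 then show ?case using T0 by simp
next
  case (Suc d)
  let ?C = "cf_tail (Suc i) d" and ?T' = "T (Suc i)"
  have C0: "?C $ 0 \<noteq> 0" by (simp add: cf_tail_nth0 cf_a_ne0)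
  have T'0: "?T' $ 0 \<noteq> 0" by (simp add: T0 cf_a_ne0)
  have "cf_tail i (Suc d) - T i = fps_const (cf_b (Suc i)) * fps_X * (inverse ?C - inverse ?T')"
    by (subst rel) (simp add: algebra_simps)
  also have "\<dots> = fps_X * ((?T' - ?C) * (fps_const (cf_b (Suc i)) * (inverse ?C * inverse ?T')))"
    unfolding inv_diff[OF C0 T'0] by (simp add: algebra_simps)
  finally have e: "cf_tail i (Suc d) - T i = fps_X * ((?T' - ?C) * (fps_const (cf_b (Suc i)) * (inverse ?C * inverse ?T')))" .
  show ?case
  proof (cases k)
    case 0 then show ?thesis unfolding e by simp
  next
    case (Suc k')
    have low: "(?T' - ?C) $ j = 0" if "j \<le> d" for j
      using Suc.IH[of j "Suc i"] that by simp
    have "k' \<le> d" using Suc.prems Suc by simp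
    then show ?thesis unfolding e Suc by (simp add: mult_low[OF low])
  qed
qed

lemma lim_from_agree:
  fixes s :: "nat \<Rightarrow> 'a::group_add fps"
  assumes "\<And>n k. k \<le> n \<Longrightarrow> (s n - a) $ k = 0"
  shows "s \<longlonglongrightarrow> a"
proof -
  have "\<exists>n0. \<forall>n \<ge> n0. dist (s n) a < r" if "r > 0" for r
  proof -
    obtain n0 where n0: "(1/2)^n0 < r"
      using reals_power_lt_ex[OF \<open>r > 0\<close>, of 2] by auto
    have "dist (s n) a < r" if nn0: "n \<ge> n0" for n
    proof (cases "s n = a")
      case True then show ?thesis using \<open>r > 0\<close> by simp
    next
      case False
      have kn: "subdegree (s n - a) > n"
        by (rule subdegree_greaterI) (use False assms in auto)
      have "dist (s n) a = inverse (2 ^ subdegree (s n - a))" using False by (simp add: dist_fps_def)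
      also have "\<dots> < inverse (2 ^ n)"
        using kn by (intro less_imp_inverse_less power_strict_increasing) auto
      also have "\<dots> = (1/2)^n" by (simp add: power_one_over inverse_eq_divide)
      also have "\<dots> \<le> (1/2)^n0" using nn0 by (intro power_decreasing) auto
      also have "\<dots> < r" by (rule n0)
      finally show ?thesis .
    qed
    then show ?thesis by blast
  qed
  then show ?thesis unfolding lim_sequentially by blast
qed

theorem mainTheorem8:
  fixes beta :: "nat \<Rightarrow> Qq"
  assumes "\<And>n. qvar * (\<Sum>k = 0..n. of_nat (n choose k) * qvar ^ k * beta k) - beta n = bc_rhs n"
  shows "cf_convergent \<longlonglongrightarrow> Abs_fps beta"
proof -
  note h = assms
  have b0: "beta 0 = 1" by (rule beta_zero[OF h])
  show ?thesis
proof (rule lim_from_agree)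
  fix n k :: nat assume kn: "k \<le> n"
  let ?B = "Abs_fps beta"
  have B0: "?B $ 0 \<noteq> 0" using b0 by simp
  have T0: "\<And>i. Tq beta i $ 0 = cf_a i" using Tq_inv[OF h] by blast
  have low: "(cf_tail 0 n - Tq beta 0) $ j = 0" if "j \<le> n" for j
    by (rule tail_agree[OF Tq_rel[OF h] T0 that])
  have C0: "cf_tail 0 n $ 0 \<noteq> 0" by (simp add: cf_tail_nth0 cf_a_ne0)
  have TT0: "Tq beta 0 $ 0 \<noteq> 0" by (metis T0 cf_a_ne0)
  have "cf_convergent n - ?B = inverse (cf_tail 0 n) - inverse (Tq beta 0)"
    unfolding cf_convergent_def using B0 by simp
  also have "\<dots> = - ((cf_tail 0 n - Tq beta 0) * (inverse (cf_tail 0 n) * inverse (Tq beta 0)))"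
    unfolding inv_diff[OF C0 TT0] by (simp add: algebra_simps)
  finally show "(cf_convergent n - ?B) $ k = 0" using mult_low[OF low kn] by simp
qed
qed
end
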